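(* The maximal number of periods that an active candidate will be in the work state is $\lg_X{n}$.
   Context: A broadcast network is modeled as a connected graph G(V,E) with n nodes. In the fragment-level leader election algorithm, nodes are partitioned into fragments each with a candidate; id(F) = (size, candidate identity) ordered lexicographically; external edges are directed from the larger-id to the smaller-id fragment. Initially each node is a size-1 fragment in state wait. A fragment whose external edges are all incoming enters work, counts its size new_size, and compares with its maximal neighbor F': if new_size > X · size(F') (X > 1) it remains active, updates its size, makes its external edges outgoing and returns to wait; otherwise it joins F'. A fragment with no external edges is the leader. It has been shown that if a fragment enters the work state at two consecutive times and remains active, with known size k_i at the first entry and size k_{i+1} after counting at the second, then k_{i+1} ≥ X^2 · k_i. *)

theory Defs
  imports Complex_Main
begin

end

theory Submission
  imports Defs
begin

theorem corollary5:
  fixes X :: real and n m :: nat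
    and s :: "nat \<Rightarrow> nat"   \<comment> \<open>s i = size counted in the i-th work period in which the candidate remains active\<close>
    and nb :: "nat \<Rightarrow> nat"  \<comment> \<open>nb i = size of the maximal neighbouring fragment in that period\<close>
  assumes X: "X > 1"
    and n: "n \<ge> 1"
    and active: "\<And>i. i < m \<Longrightarrow> nb i \<ge> 1 \<and> real (s i) > X * real (nb i)"
    and bounded: "\<And>i. i < m \<Longrightarrow> s i \<le> n"
    and growth: "\<And>i. Suc i < m \<Longrightarrow> real (s (Suc i)) \<ge> X\<^sup>2 * real (s i)"
  shows "real m \<le> log X (real n)"
proof (cases m)
  case 0
  then show ?thesis using n X by simp
next
  case (Suc k)
  have key: "i < m \<Longrightarrow> real (s i) > X ^ (i+1)" for i
  proof (induction i)
    case 0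
    have "nb 0 \<ge> 1" "real (s 0) > X * real (nb 0)" using active[OF 0] by auto
    moreover have "X * real (nb 0) \<ge> X" using \<open>nb 0 \<ge> 1\<close> X by simp
    ultimately show ?case by simp
  next
    case (Suc i)
    have IH: "real (s i) > X ^ (i+1)" using Suc by simp
    have "X ^ (Suc i + 1) = X * X ^ (i+1)" by simp
    also have "\<dots> \<le> X\<^sup>2 * X ^ (i+1)"
      using X by (intro mult_right_mono) (auto simp: power2_eq_square)
    also have "\<dots> < X\<^sup>2 * real (s i)" using IH X by simp
    also have "\<dots> \<le> real (s (Suc i))" using growth Suc.prems by simp
    finally show ?case .
  qed
  have "X ^ m \<le> X ^ (k+1)" using Suc by simp
  also have "\<dots> < real (s k)" using key Suc by simp
  also have "\<dots> \<le> real n" using bounded Suc by simp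
  finally have "X ^ m < real n" .
  hence "log X (X ^ m) < log X (real n)" using X n by (subst log_less_cancel_iff) auto
  moreover have "log X (X ^ m) = real m" using X by (simp add: log_nat_power)
  ultimately show ?thesis by simp
qed

end
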